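(* The region $$\mathcal{M}=\left\{(S,I)\in(\mathbb{R}_0^+)^2:\ 0\le S\le A,\ 0\le S+I\le\frac{A(\sigma+g+A)}{\sigma+g}\right\}$$ is positively flow-invariant for the impulsive system $$\dot S=S(A-S)-\beta_0 IS,\quad \dot I=\beta_0 IS-(\sigma+g)I\ (t\neq nT),\quad S(nT)=(1-p)S(nT^-),\ I(nT)=I(nT^-),\ n\in\mathbb{N}.$$
   Context: Parameters: $A\in(0,1]$, $\beta_0\ge0$, $\sigma,g\ge0$ with $\sigma+g>0$, $p\in[0,1]$, $T>0$; it is assumed that $S(t)\le A$ for all $t\ge0$. A set $\mathcal{K}$ is positively flow-invariant if every solution starting in $\mathcal{K}$ stays in $\mathcal{K}$ for all $t\ge0$. *)

theory Defs
  imports "HOL-Analysis.Analysis"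
begin

definition region_M :: "real \<Rightarrow> real \<Rightarrow> real \<Rightarrow> (real \<times> real) set" where
  "region_M A \<sigma> g = {(S, I). S \<ge> 0 \<and> I \<ge> 0 \<and> S \<le> A \<and> 0 \<le> S + I \<and>
                         S + I \<le> A * (\<sigma> + g + A) / (\<sigma> + g)}"

text \<open>A solution of the impulsive system on [0, infinity): on every interval
  [nT, (n+1)T) the ODE holds (right derivative at the impulse times, hence
  right-continuity there); at every impulse time nT with n >= 1 the left limits
  exist, S jumps by the factor (1-p) and I is continuous.\<close>
definition impulsive_solution ::
  "real \<Rightarrow> real \<Rightarrow> real \<Rightarrow> real \<Rightarrow> real \<Rightarrow> real \<Rightarrow> (real \<Rightarrow> real) \<Rightarrow> (real \<Rightarrow> real) \<Rightarrow> bool" where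
  "impulsive_solution A \<beta>0 \<sigma> g p T S I \<longleftrightarrow>
     (\<forall>n::nat. \<forall>t \<in> {real n * T ..< real (Suc n) * T}.
        (S has_real_derivative (S t * (A - S t) - \<beta>0 * I t * S t))
           (at t within {real n * T ..< real (Suc n) * T}) \<and>
        (I has_real_derivative (\<beta>0 * I t * S t - (\<sigma> + g) * I t))
           (at t within {real n * T ..< real (Suc n) * T})) \<and>
     (\<forall>n::nat. n \<ge> 1 \<longrightarrow>
        (\<exists>L. (S \<longlongrightarrow> L) (at_left (real n * T)) \<and> S (real n * T) = (1 - p) * L) \<and>
        (I \<longlongrightarrow> I (real n * T)) (at_left (real n * T)))"

definition positively_flow_invariant ::
  "real \<Rightarrow> real \<Rightarrow> real \<Rightarrow> real \<Rightarrow> real \<Rightarrow> real \<Rightarrow> (real \<times> real) set \<Rightarrow> bool" where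
  "positively_flow_invariant A \<beta>0 \<sigma> g p T K \<longleftrightarrow>
     (\<forall>S I. impulsive_solution A \<beta>0 \<sigma> g p T S I \<and> (\<forall>t\<ge>0. S t \<le> A) \<and> (S 0, I 0) \<in> K
        \<longrightarrow> (\<forall>t\<ge>0. (S t, I t) \<in> K))"

end

theory Submission
  imports Defs
begin

lemma key:
  fixes f f' :: "real \<Rightarrow> real"
  assumes ab: "a \<le> b" and cont: "continuous_on {a..b} f"
    and der: "\<And>x. a < x \<Longrightarrow> x < b \<Longrightarrow> (f has_real_derivative f' x) (at x)"
    and fa: "f a \<le> 0"
    and neg: "\<And>x. a < x \<Longrightarrow> x < b \<Longrightarrow> f x > 0 \<Longrightarrow> f' x \<le> 0"
  shows "f b \<le> 0"
proof (rule ccontr)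
  assume fb: "\<not> f b \<le> 0"
  define Z where "Z = {a..b} \<inter> f -` {..0}"
  have cl: "closed Z" unfolding Z_def
    by (rule continuous_closed_preimage[OF cont]) auto
  have ne: "Z \<noteq> {}" using ab fa unfolding Z_def by auto
  have bdd: "bdd_above Z" unfolding Z_def by (rule bdd_aboveI[of _ b]) auto
  define t0 where "t0 = Sup Z"
  have t0Z: "t0 \<in> Z" unfolding t0_def by (rule closed_contains_Sup[OF ne bdd cl])
  hence t0: "a \<le> t0" "t0 \<le> b" "f t0 \<le> 0" unfolding Z_def by auto
  have tb: "t0 < b" using t0 fb by (metis order.not_eq_order_implies_strict)
  have pos: "f x > 0" if "t0 < x" "x \<le> b" for x
  proof (rule ccontr)
    assume "\<not> f x > 0"
    hence "x \<in> Z" using that t0 unfolding Z_def by auto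
    hence "x \<le> t0" unfolding t0_def using bdd by (simp add: cSup_upper)
    thus False using that by simp
  qed
  have "continuous_on {t0..b} f" using t0 by (intro continuous_on_subset[OF cont]) auto
  moreover have "\<And>x. t0 < x \<Longrightarrow> x < b \<Longrightarrow> f differentiable (at x)"
    using der t0 by (meson dual_order.strict_trans2 real_differentiable_def)
  ultimately obtain l z where z: "t0 < z" "z < b" "DERIV f z :> l" "f b - f t0 = (b - t0) * l"
    using MVT[OF tb] by blast
  have "l = f' z" using DERIV_unique[OF z(3) der] z t0 by simp
  hence "l \<le> 0" using neg[of z] pos[of z] z t0 by simp
  hence "(b - t0) * l \<le> 0" using tb by (simp add: mult_nonneg_nonpos)
  thus False using z(4) t0 fb by simp
qed

lemma nonneg:
  fixes f h :: "real \<Rightarrow> real"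
  assumes ab: "a \<le> b" and cf: "continuous_on {a..b} f" and ch: "continuous_on {a..b} h"
    and der: "\<And>x. a < x \<Longrightarrow> x < b \<Longrightarrow> (f has_real_derivative f x * h x) (at x)"
    and fa: "f a \<ge> 0"
  shows "f b \<ge> 0"
proof -
  have "compact (h ` {a..b})" by (rule compact_continuous_image[OF ch compact_Icc])
  hence "bounded (h ` {a..b})" by (rule compact_imp_bounded)
  then obtain K where K: "\<And>x. x \<in> {a..b} \<Longrightarrow> \<bar>h x\<bar> \<le> K"
    unfolding bounded_real by (metis image_eqI)
  define u where "u t = - (f t * exp (- K * t))" for t
  have "u b \<le> 0"
  proof (rule key[OF ab, where f' = "\<lambda>t. - (f t * h t * exp (- K * t) + f t * (exp (- K * t) * (- K)))"])
    show "continuous_on {a..b} u" unfolding u_def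
      by (intro continuous_intros cf)
    show "u a \<le> 0" using fa unfolding u_def by simp
    fix x assume x: "a < x" "x < b"
    show "(u has_real_derivative - (f x * h x * exp (- K * x) + f x * (exp (- K * x) * (- K)))) (at x)"
      unfolding u_def
      by (rule derivative_eq_intros der x refl | simp)+
    assume "u x > 0"
    hence fx: "f x < 0" unfolding u_def by (simp add: mult_less_0_iff)
    have "h x - K \<le> 0" using K[of x] x by auto
    hence "f x * (h x - K) \<ge> 0" using fx by (simp add: mult_nonpos_nonpos)
    hence "exp (- K * x) * (f x * (h x - K)) \<ge> 0" by simp
    thus "- (f x * h x * exp (- K * x) + f x * (exp (- K * x) * (- K))) \<le> 0"
      by (simp add: algebra_simps)
  qed
  thus ?thesis unfolding u_def by (simp add: zero_le_mult_iff)
qed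

lemma interval:
  fixes S I :: "real \<Rightarrow> real" and A be c a b B :: real
  assumes ab: "a < b"
    and dS: "\<And>t. t \<in> {a..<b} \<Longrightarrow> (S has_real_derivative (S t * (A - S t) - be * I t * S t)) (at t within {a..<b})"
    and dI: "\<And>t. t \<in> {a..<b} \<Longrightarrow> (I has_real_derivative (be * I t * S t - c * I t)) (at t within {a..<b})"
    and SA: "\<And>t. t \<in> {a..<b} \<Longrightarrow> S t \<le> A"
    and A: "0 < A" and c: "0 < c" and B: "B = A * (c + A) / c"
    and Sa: "S a \<ge> 0" and Ia: "I a \<ge> 0" and Na: "S a + I a \<le> B"
    and t: "t \<in> {a..<b}"
  shows "S t \<ge> 0 \<and> I t \<ge> 0 \<and> S t + I t \<le> B"
proof -
  have cS: "continuous_on {a..t1} S" and cI: "continuous_on {a..t1} I" if "t1 \<in> {a..<b}" for t1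
  proof -
    have "continuous_on {a..<b} S"
      using dS by (meson DERIV_continuous continuous_on_eq_continuous_within)
    thus "continuous_on {a..t1} S" by (rule continuous_on_subset) (use that in auto)
    have "continuous_on {a..<b} I"
      using dI by (meson DERIV_continuous continuous_on_eq_continuous_within)
    thus "continuous_on {a..t1} I" by (rule continuous_on_subset) (use that in auto)
  qed
  have dS': "(S has_real_derivative (S x * (A - S x) - be * I x * S x)) (at x)"
   and dI': "(I has_real_derivative (be * I x * S x - c * I x)) (at x)"
    if "a < x" "x < b" for x
  proof -
    have "at x within {a..<b} = at x"
      by (rule at_within_interior) (use that in simp)
    thus "(S has_real_derivative (S x * (A - S x) - be * I x * S x)) (at x)"
      "(I has_real_derivative (be * I x * S x - c * I x)) (at x)"
      using dS[of x] dI[of x] that by auto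
  qed
  have Spos: "S t1 \<ge> 0" if t1: "t1 \<in> {a..<b}" for t1
  proof (rule nonneg[where a=a and b=t1 and f=S and h = "\<lambda>x. A - S x - be * I x"])
    show "a \<le> t1" using t1 by simp
    show "continuous_on {a..t1} S" by (rule cS[OF t1])
    show "continuous_on {a..t1} (\<lambda>x. A - S x - be * I x)"
      by (intro continuous_intros cS[OF t1] cI[OF t1])
    show "S a \<ge> 0" by (rule Sa)
    fix x assume "a < x" "x < t1"
    hence "a < x" "x < b" using t1 by auto
    from dS'[OF this] show "(S has_real_derivative S x * (A - S x - be * I x)) (at x)"
      by (rule DERIV_cong) (simp add: algebra_simps)
  qed
  have Ipos: "I t1 \<ge> 0" if t1: "t1 \<in> {a..<b}" for t1
  proof (rule nonneg[where a=a and b=t1 and f=I and h = "\<lambda>x. be * S x - c"])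
    show "a \<le> t1" using t1 by simp
    show "continuous_on {a..t1} I" by (rule cI[OF t1])
    show "continuous_on {a..t1} (\<lambda>x. be * S x - c)"
      by (intro continuous_intros cS[OF t1])
    show "I a \<ge> 0" by (rule Ia)
    fix x assume "a < x" "x < t1"
    hence "a < x" "x < b" using t1 by auto
    from dI'[OF this] show "(I has_real_derivative I x * (be * S x - c)) (at x)"
      by (rule DERIV_cong) (simp add: algebra_simps)
  qed
  have Bc: "B * c = A * (c + A)" using B c by simp
  have "S t + I t - B \<le> 0"
  proof (rule key[where a=a and b=t and f="\<lambda>x. S x + I x - B" and f' = "\<lambda>x. (S x * (A - S x) - be * I x * S x) + (be * I x * S x - c * I x)"])
    show "a \<le> t" using t by simp
    show "continuous_on {a..t} (\<lambda>x. S x + I x - B)"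
      by (intro continuous_intros cS[OF t] cI[OF t])
    show "S a + I a - B \<le> 0" using Na by simp
    fix x assume x: "a < x" "x < t"
    hence xb: "a < x" "x < b" using t by auto
    show "((\<lambda>x. S x + I x - B) has_real_derivative (S x * (A - S x) - be * I x * S x) + (be * I x * S x - c * I x)) (at x)"
      using dS'[OF xb] dI'[OF xb] by (auto intro!: derivative_eq_intros)
    assume gt: "S x + I x - B > 0"
    have x0: "S x \<ge> 0" "S x \<le> A" using Spos SA xb by auto
    have "S x * (c + A - S x) \<le> A * (c + A)"
      by (rule mult_mono) (use x0 A c in auto)
    hence "S x * (A - S x) - c * I x \<le> c * (B - (S x + I x))"
      using Bc by (simp add: algebra_simps)
    also have "\<dots> \<le> 0" using gt c by (simp add: mult_nonneg_nonpos)
    finally show "(S x * (A - S x) - be * I x * S x) + (be * I x * S x - c * I x) \<le> 0"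
      by simp
  qed
  thus ?thesis using Spos[OF t] Ipos[OF t] by simp
qed

theorem lemma1:
  fixes A \<beta>0 \<sigma> g p T :: real
  assumes "0 < A" "A \<le> 1" "\<beta>0 \<ge> 0" "\<sigma> \<ge> 0" "g \<ge> 0" "\<sigma> + g > 0"
    "0 \<le> p" "p \<le> 1" "T > 0"
  shows "positively_flow_invariant A \<beta>0 \<sigma> g p T (region_M A \<sigma> g)"
  unfolding positively_flow_invariant_def
proof (intro allI impI)
  fix S I :: "real \<Rightarrow> real"
  assume H: "impulsive_solution A \<beta>0 \<sigma> g p T S I \<and> (\<forall>t\<ge>0. S t \<le> A) \<and> (S 0, I 0) \<in> region_M A \<sigma> g"
  define c where "c = \<sigma> + g"
  define B where "B = A * (c + A) / c"
  have c: "0 < c" using assms c_def by simp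
  have A: "0 < A" using assms by simp
  have RB: "region_M A \<sigma> g = {(S, I). S \<ge> 0 \<and> I \<ge> 0 \<and> S \<le> A \<and> 0 \<le> S + I \<and> S + I \<le> B}"
    unfolding region_M_def B_def c_def by (simp add: algebra_simps)
  have sol: "impulsive_solution A \<beta>0 \<sigma> g p T S I" and SA: "\<And>t. t \<ge> 0 \<Longrightarrow> S t \<le> A"
    and init: "S 0 \<ge> 0" "I 0 \<ge> 0" "S 0 + I 0 \<le> B" using H unfolding RB by auto
  note D = sol[unfolded impulsive_solution_def, folded c_def]
  have ab: "real n * T < real (Suc n) * T" for n using assms by simp
  have IV: "S t \<ge> 0 \<and> I t \<ge> 0 \<and> S t + I t \<le> B"
    if "S (real n * T) \<ge> 0" "I (real n * T) \<ge> 0" "S (real n * T) + I (real n * T) \<le> B"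
       "t \<in> {real n * T ..< real (Suc n) * T}" for n t
  proof (rule interval[OF ab[of n], where A=A and be=\<beta>0 and c=c and S=S and I=I and B=B and t=t])
    show "\<And>t. t \<in> {real n * T..<real (Suc n) * T} \<Longrightarrow>
          (S has_real_derivative S t * (A - S t) - \<beta>0 * I t * S t) (at t within {real n * T..<real (Suc n) * T})"
      using D by blast
    show "\<And>t. t \<in> {real n * T..<real (Suc n) * T} \<Longrightarrow>
          (I has_real_derivative \<beta>0 * I t * S t - c * I t) (at t within {real n * T..<real (Suc n) * T})"
      using D by blast
    show "\<And>t. t \<in> {real n * T..<real (Suc n) * T} \<Longrightarrow> S t \<le> A"
      using SA assms by (meson atLeastLessThan_iff order_trans zero_le_mult_iff of_nat_0_le_iff less_imp_le)
  qed (use that A c B_def in auto)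
  have Q: "\<forall>t \<in> {real n * T ..< real (Suc n) * T}. S t \<ge> 0 \<and> I t \<ge> 0 \<and> S t + I t \<le> B" for n
  proof (induction n)
    case 0
    show ?case using IV[of 0] init by simp
  next
    case (Suc n)
    let ?x = "real (Suc n) * T"
    have ev: "eventually (\<lambda>t. S t \<ge> 0 \<and> I t \<ge> 0 \<and> S t + I t \<le> B) (at_left ?x)"
      using eventually_at_left_real[OF ab[of n]] by eventually_elim (use Suc.IH in auto)
    have "Suc n \<ge> 1" by simp
    with D obtain L where L: "(S \<longlongrightarrow> L) (at_left ?x)" "S ?x = (1 - p) * L"
      and LI: "(I \<longlongrightarrow> I ?x) (at_left ?x)" by blast
    have L0: "L \<ge> 0"
      by (rule tendsto_lowerbound[OF L(1)]) (use ev in \<open>auto elim: eventually_mono\<close>)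
    have I0: "I ?x \<ge> 0"
      by (rule tendsto_lowerbound[OF LI]) (use ev in \<open>auto elim: eventually_mono\<close>)
    have N0: "L + I ?x \<le> B"
      by (rule tendsto_upperbound[OF tendsto_add[OF L(1) LI]]) (use ev in \<open>auto elim: eventually_mono\<close>)
    have "S ?x \<ge> 0" "S ?x \<le> L" unfolding L(2) using L0 assms by (auto simp: mult_nonneg_nonneg algebra_simps mult_left_le)
    hence "S ?x \<ge> 0" "I ?x \<ge> 0" "S ?x + I ?x \<le> B" using I0 N0 by auto
    thus ?case using IV[of "Suc n"] by auto
  qed
  fix t :: real assume t: "t \<ge> 0"
  {
    define n where "n = nat \<lfloor>t / T\<rfloor>"
    have rn: "real n = of_int \<lfloor>t / T\<rfloor>" unfolding n_def using t assms by simp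
    have f1: "of_int \<lfloor>t / T\<rfloor> \<le> t / T" and f2: "t / T < of_int \<lfloor>t / T\<rfloor> + 1" by linarith+
    have "of_int \<lfloor>t / T\<rfloor> * T \<le> t" using f1 assms(9) by (simp add: le_divide_eq)
    moreover have "t < (of_int \<lfloor>t / T\<rfloor> + 1) * T" using f2 pos_divide_less_eq[OF assms(9)] by blast
    ultimately have "real n * T \<le> t" "t < real (Suc n) * T" using rn
      by (simp_all add: algebra_simps)
    hence "S t \<ge> 0 \<and> I t \<ge> 0 \<and> S t + I t \<le> B" using Q[of n] by auto
    thus "(S t, I t) \<in> region_M A \<sigma> g" unfolding RB using SA[OF t] by auto
  }
qed

end
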